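(* For each $\tau\in(0,1)$ and any real-valued random variable $W$ with finite expectation which is not almost surely constant, there exist real-valued random variables $U$ and $V$ with $\mathbb{E} U \neq \mathbb{E} V$ such that \[ \mathbb{P}(W\in C) = (1-\tau)\,\mathbb{P}(U\in C) + \tau\,\mathbb{P}(V\in C) \] for all Borel sets $C\subseteq\mathbb{R}$. Moreover, if $W$ has finite variance, then $U$ and $V$ can be chosen to have finite variances as well. *)

theory Defs
  imports "HOL-Probability.Probability"
begin

end

theory Submission
  imports Defs
begin

lemma key_split:
  fixes G :: "real \<Rightarrow> real" and h :: "real \<Rightarrow> ennreal" and \<tau> :: real
  assumes Qm[measurable]: "G \<in> borel_measurable borel" and hm[measurable]: "h \<in> borel_measurable borel"
    and t0: "0 < \<tau>" and t1: "\<tau> < 1"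
  shows "(\<integral>\<^sup>+w. h (G w) * indicator {0<..<1} w \<partial>lborel) =
     ennreal (1-\<tau>) * (\<integral>\<^sup>+s. h (G ((1-\<tau>)* s)) * indicator {0<..<1} s \<partial>lborel)
   + ennreal \<tau> * (\<integral>\<^sup>+s. h (G (1-\<tau>+\<tau>* s)) * indicator {0<..<1} s \<partial>lborel)"
proof -
  have "(\<integral>\<^sup>+w. h (G w) * indicator {0<..<1} w \<partial>lborel) =
     (\<integral>\<^sup>+w. h (G w) * indicator {0<..<1-\<tau>} w + h (G w) * indicator {1-\<tau>..<1} w \<partial>lborel)"
    using t0 t1 by (intro nn_integral_cong) (auto simp: indicator_def)
  also have "\<dots> = (\<integral>\<^sup>+w. h (G w) * indicator {0<..<1-\<tau>} w \<partial>lborel) + (\<integral>\<^sup>+w. h (G w) * indicator {1-\<tau>..<1} w \<partial>lborel)"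
    by (rule nn_integral_add) auto
  also have "(\<integral>\<^sup>+w. h (G w) * indicator {0<..<1-\<tau>} w \<partial>lborel) = 
      ennreal \<bar>1-\<tau>\<bar> * (\<integral>\<^sup>+s. h (G (0 + (1-\<tau>)* s)) * indicator {0<..<1-\<tau>} (0 + (1-\<tau>)* s) \<partial>lborel)"
    using t1 by (intro nn_integral_real_affine) auto
  also have "(\<integral>\<^sup>+s. h (G (0 + (1-\<tau>)* s)) * indicator {0<..<1-\<tau>} (0 + (1-\<tau>)* s) \<partial>lborel)
     = (\<integral>\<^sup>+s. h (G ((1-\<tau>)* s)) * indicator {0<..<1} s \<partial>lborel)"
    using t0 t1 by (intro nn_integral_cong) (auto simp: indicator_def mult_less_cancel_left2 zero_less_mult_iff)
  also have "(\<integral>\<^sup>+w. h (G w) * indicator {1-\<tau>..<1} w \<partial>lborel) = 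
      ennreal \<bar>\<tau>\<bar> * (\<integral>\<^sup>+s. h (G (1-\<tau> + \<tau>* s)) * indicator {1-\<tau>..<1} (1-\<tau> + \<tau>* s) \<partial>lborel)"
    using t0 by (intro nn_integral_real_affine) auto
  also have "(\<integral>\<^sup>+s. h (G (1-\<tau> + \<tau>* s)) * indicator {1-\<tau>..<1} (1-\<tau> + \<tau>* s) \<partial>lborel)
     = (\<integral>\<^sup>+s. h (G (1-\<tau>+\<tau>* s)) * indicator {0<..<1} s \<partial>lborel)"
  proof (intro nn_integral_cong_AE)
    show "AE s in lborel. h (G (1-\<tau> + \<tau>* s)) * indicator {1-\<tau>..<1} (1-\<tau> + \<tau>* s) = h (G (1-\<tau>+\<tau>* s)) * indicator {0<..<1} s"
      using AE_lborel_singleton[of 0]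
    proof eventually_elim
      case (elim s)
      have "1-\<tau> + \<tau>* s \<in> {1-\<tau>..<1} \<longleftrightarrow> s \<in> {0..<1}" using t0 t1
        by (auto simp: zero_le_mult_iff mult_less_cancel_left2)
      then show ?case using elim by (auto simp: indicator_def)
    qed
  qed
  finally show ?thesis using t0 t1 by simp
qed


theorem proposition1p3:
  fixes M :: "'a measure" and W :: "'a \<Rightarrow> real" and \<tau> :: real
  assumes "prob_space M"
    and "W \<in> borel_measurable M"
    and "integrable M W"
    and "\<not> (\<exists>c. AE x in M. W x = c)"
    and "0 < \<tau>" and "\<tau> < 1"
  shows "\<exists>(N :: real measure) (U :: real \<Rightarrow> real) (V :: real \<Rightarrow> real).
           prob_space N \<and> U \<in> borel_measurable N \<and> V \<in> borel_measurable N \<and>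
           integrable N U \<and> integrable N V \<and>
           integral\<^sup>L N U \<noteq> integral\<^sup>L N V \<and>
           (\<forall>C \<in> sets borel.
              measure M {x \<in> space M. W x \<in> C} =
                (1 - \<tau>) * measure N {x \<in> space N. U x \<in> C}
                + \<tau> * measure N {x \<in> space N. V x \<in> C}) \<and>
           (integrable M (\<lambda>x. (W x)\<^sup>2) \<longrightarrow>
              integrable N (\<lambda>x. (U x)\<^sup>2) \<and> integrable N (\<lambda>x. (V x)\<^sup>2))"
proof -
  interpret M: prob_space M by fact
  note Wm[measurable] = assms(2)
  note t0 = assms(5) and t1 = assms(6)
  define \<mu> where "\<mu> = distr M borel W"
  have rd: "real_distribution \<mu>" unfolding \<mu>_def by (rule M.real_distribution_distr) simp
  interpret D: cdf_distribution \<mu> unfolding cdf_distribution_def by (rule rd)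
  define I where "I = (\<lambda>\<omega>. Inf {x. \<omega> \<le> cdf \<mu> x})"
  have Im: "I \<in> borel_measurable (restrict_space borel {0<..<1})"
    unfolding I_def by (rule D.measurable_CI)
  have Im': "I \<in> borel_measurable (restrict_space lborel {0<..<1})"
    using Im by (simp add: measurable_def space_restrict_space sets_restrict_space)
  have distrI: "distr (restrict_space lborel {0<..<1::real}) borel I = \<mu>"
    unfolding I_def by (rule D.distr_I_eq_M)
  have monoI: "mono_on {0<..<1} I" unfolding I_def by (rule D.mono_I)
  define G where "G = (\<lambda>\<omega>. if \<omega> \<in> {0<..<1::real} then I \<omega> else 0)"
  have Gm[measurable]: "G \<in> borel_measurable borel"
    unfolding G_def using Im by (subst (asm) measurable_restrict_space_iff) auto
  define U where "U = (\<lambda>s. G ((1-\<tau>) * s))"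
  define V where "V = (\<lambda>s. G (1-\<tau>+\<tau> * s))"
  define N where "N = restrict_space lborel {0<..<1::real}"
  have Um[measurable]: "U \<in> borel_measurable borel" unfolding U_def by measurable
  have Vm[measurable]: "V \<in> borel_measurable borel" unfolding V_def by measurable
  have UmN: "U \<in> borel_measurable N" unfolding N_def
    by (rule measurable_restrict_space1) simp
  have VmN: "V \<in> borel_measurable N" unfolding N_def
    by (rule measurable_restrict_space1) simp
  have pN: "prob_space N" unfolding N_def
    by (auto simp add: emeasure_restrict_space space_restrict_space intro!: prob_spaceI)
  interpret N: prob_space N by (rule pN)
  have spN: "space N = {0<..<1}" unfolding N_def by (simp add: space_restrict_space)

  have T: "(\<integral>\<^sup>+x. h (W x) \<partial>M) = ennreal (1-\<tau>) * (\<integral>\<^sup>+s. h (U s) \<partial>N) + ennreal \<tau> * (\<integral>\<^sup>+s. h (V s) \<partial>N)"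
    if hm[measurable]: "h \<in> borel_measurable borel" for h :: "real \<Rightarrow> ennreal"
  proof -
    have "(\<integral>\<^sup>+x. h (W x) \<partial>M) = (\<integral>\<^sup>+y. h y \<partial>\<mu>)"
      unfolding \<mu>_def by (subst nn_integral_distr) auto
    also have "\<dots> = (\<integral>\<^sup>+\<omega>. h (I \<omega>) \<partial>restrict_space lborel {0<..<1})"
      unfolding distrI[symmetric] by (subst nn_integral_distr) (auto intro: Im')
    also have "\<dots> = (\<integral>\<^sup>+\<omega>. h (I \<omega>) * indicator {0<..<1} \<omega> \<partial>lborel)"
      by (subst nn_integral_restrict_space) auto
    also have "\<dots> = (\<integral>\<^sup>+\<omega>. h (G \<omega>) * indicator {0<..<1} \<omega> \<partial>lborel)"
      by (intro nn_integral_cong) (auto simp: G_def indicator_def)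
    also have "\<dots> = ennreal (1-\<tau>) * (\<integral>\<^sup>+s. h (U s) * indicator {0<..<1} s \<partial>lborel)
      + ennreal \<tau> * (\<integral>\<^sup>+s. h (V s) * indicator {0<..<1} s \<partial>lborel)"
      unfolding U_def V_def by (rule key_split) (use t0 t1 in auto)
    also have "\<dots> = ennreal (1-\<tau>) * (\<integral>\<^sup>+s. h (U s) \<partial>N) + ennreal \<tau> * (\<integral>\<^sup>+s. h (V s) \<partial>N)"
      unfolding N_def by (subst (1 2) nn_integral_restrict_space) auto
    finally show ?thesis .
  qed

  have E: "emeasure M {x \<in> space M. W x \<in> C} = ennreal (1-\<tau>) * emeasure N {x \<in> space N. U x \<in> C}
      + ennreal \<tau> * emeasure N {x \<in> space N. V x \<in> C}" if C: "C \<in> sets borel" for C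
  proof -
    have [measurable]: "C \<in> sets borel" by fact
     have "emeasure M {x \<in> space M. W x \<in> C} = (\<integral>\<^sup>+x. indicator C (W x) \<partial>M)"
    proof -
      have "(\<integral>\<^sup>+x. indicator C (W x) \<partial>M) = (\<integral>\<^sup>+x. indicator {x \<in> space M. W x \<in> C} x \<partial>M)"
        by (intro nn_integral_cong) (auto simp: indicator_def)
      also have "\<dots> = emeasure M {x \<in> space M. W x \<in> C}"
        by (intro nn_integral_indicator) measurable
      finally show ?thesis ..
    qed
    moreover have "emeasure N {x \<in> space N. U x \<in> C} = (\<integral>\<^sup>+x. indicator C (U x) \<partial>N)"
    proof -
      have "(\<integral>\<^sup>+x. indicator C (U x) \<partial>N) = (\<integral>\<^sup>+x. indicator {x \<in> space N. U x \<in> C} x \<partial>N)"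
        by (intro nn_integral_cong) (auto simp: indicator_def)
      also have "\<dots> = emeasure N {x \<in> space N. U x \<in> C}"
        using measurable_sets[OF UmN C] by (intro nn_integral_indicator) (simp add: Int_def conj_commute vimage_def)
      finally show ?thesis ..
    qed
    moreover have "emeasure N {x \<in> space N. V x \<in> C} = (\<integral>\<^sup>+x. indicator C (V x) \<partial>N)"
    proof -
      have "(\<integral>\<^sup>+x. indicator C (V x) \<partial>N) = (\<integral>\<^sup>+x. indicator {x \<in> space N. V x \<in> C} x \<partial>N)"
        by (intro nn_integral_cong) (auto simp: indicator_def)
      also have "\<dots> = emeasure N {x \<in> space N. V x \<in> C}"
        using measurable_sets[OF VmN C] by (intro nn_integral_indicator) (simp add: Int_def conj_commute vimage_def)
      finally show ?thesis ..
    qed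
    ultimately show ?thesis using T[of "indicator C"] by simp
  qed

  have Meq: "measure M {x \<in> space M. W x \<in> C} = (1-\<tau>) * measure N {x \<in> space N. U x \<in> C}
      + \<tau> * measure N {x \<in> space N. V x \<in> C}" if C: "C \<in> sets borel" for C
  proof -
    have "ennreal (measure M {x \<in> space M. W x \<in> C}) = ennreal ((1-\<tau>) * measure N {x \<in> space N. U x \<in> C}
      + \<tau> * measure N {x \<in> space N. V x \<in> C})"
      using E[OF C] t0 t1
      by (simp add: M.emeasure_eq_measure N.emeasure_eq_measure ennreal_mult ennreal_plus)
    then show ?thesis using t0 t1 by (subst (asm) ennreal_inj) auto
  qed

  have fin: "(\<integral>\<^sup>+s. h (U s) \<partial>N) < \<infinity> \<and> (\<integral>\<^sup>+s. h (V s) \<partial>N) < \<infinity>"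
    if hm: "h \<in> borel_measurable borel" and f: "(\<integral>\<^sup>+x. h (W x) \<partial>M) < \<infinity>" for h :: "real \<Rightarrow> ennreal"
  proof -
    have "ennreal (1-\<tau>) * (\<integral>\<^sup>+s. h (U s) \<partial>N) + ennreal \<tau> * (\<integral>\<^sup>+s. h (V s) \<partial>N) < \<infinity>"
      using T[OF hm] f by simp
    then show ?thesis using t0 t1 by (auto simp: ennreal_mult_less_top)
  qed

  have intU: "integrable N U" and intV: "integrable N V"
  proof -
    have "(\<integral>\<^sup>+x. ennreal (norm (W x)) \<partial>M) < \<infinity>" using assms(3) by (simp add: integrable_iff_bounded)
    then have "(\<integral>\<^sup>+s. ennreal (norm (U s)) \<partial>N) < \<infinity> \<and> (\<integral>\<^sup>+s. ennreal (norm (V s)) \<partial>N) < \<infinity>"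
      using fin[of "\<lambda>y. ennreal (norm y)"] by simp
    then show "integrable N U" "integrable N V" using UmN VmN by (auto simp: integrable_iff_bounded)
  qed

  have sq: "integrable N (\<lambda>x. (U x)\<^sup>2) \<and> integrable N (\<lambda>x. (V x)\<^sup>2)" if "integrable M (\<lambda>x. (W x)\<^sup>2)"
  proof -
    have "(\<integral>\<^sup>+x. ennreal (norm ((W x)\<^sup>2)) \<partial>M) < \<infinity>" using that by (simp add: integrable_iff_bounded)
    then have "(\<integral>\<^sup>+s. ennreal (norm ((U s)\<^sup>2)) \<partial>N) < \<infinity> \<and> (\<integral>\<^sup>+s. ennreal (norm ((V s)\<^sup>2)) \<partial>N) < \<infinity>"
      using fin[of "\<lambda>y. ennreal (norm (y\<^sup>2))"] by simp
    then show ?thesis using UmN VmN by (auto simp: integrable_iff_bounded)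
  qed

  define q where "q = I (1-\<tau>)"
  have Ule: "U s \<le> q" if "s \<in> space N" for s
  proof -
    have "s \<in> {0<..<1}" using that spN by simp
    then have a: "(1-\<tau>) * s \<le> 1-\<tau>" "0 < (1-\<tau>) * s" using t0 t1 mult_left_mono[of s 1 "1-\<tau>"]
      by auto
    then have "(1-\<tau>) * s \<in> {0<..<1}" "(1-\<tau>) * s \<le> 1-\<tau>" unfolding greaterThanLessThan_iff using a t0 t1 by linarith+
    moreover have "1-\<tau> \<in> {0<..<1}" using t0 t1 by simp
    ultimately show ?thesis unfolding U_def G_def q_def using mono_onD[OF monoI]
      by auto
  qed
  have Vge: "q \<le> V s" if "s \<in> space N" for s
  proof -
    have "s \<in> {0<..<1}" using that spN by simp
    then have a: "\<tau> * s < \<tau>" "0 < \<tau> * s" using t0 t1 mult_strict_left_mono[of s 1 "\<tau>"]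
      by auto
    then have "1-\<tau>+\<tau> * s \<in> {0<..<1}" "1-\<tau> \<le> 1-\<tau>+\<tau> * s" unfolding greaterThanLessThan_iff using a t0 t1 by linarith+
    moreover have "1-\<tau> \<in> {0<..<1}" using t0 t1 by simp
    ultimately show ?thesis unfolding V_def G_def q_def using mono_onD[OF monoI]
      by auto
  qed

  have neq: "integral\<^sup>L N U \<noteq> integral\<^sup>L N V"
  proof
    assume eq: "integral\<^sup>L N U = integral\<^sup>L N V"
    have i1: "integral\<^sup>L N (\<lambda>s. q - U s) = q - integral\<^sup>L N U"
      using intU by (subst Bochner_Integration.integral_diff) (auto simp: N.prob_space)
    have i2: "integral\<^sup>L N (\<lambda>s. V s - q) = integral\<^sup>L N V - q"
      using intV by (subst Bochner_Integration.integral_diff) (auto simp: N.prob_space)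
    have n1: "integral\<^sup>L N (\<lambda>s. q - U s) \<ge> 0" by (intro integral_nonneg_AE AE_I2) (use Ule in auto)
    have n2: "integral\<^sup>L N (\<lambda>s. V s - q) \<ge> 0" by (intro integral_nonneg_AE AE_I2) (use Vge in auto)
    have z1: "integral\<^sup>L N (\<lambda>s. q - U s) = 0" and z2: "integral\<^sup>L N (\<lambda>s. V s - q) = 0"
      using i1 i2 n1 n2 eq by linarith+
    have "AE s in N. q - U s = 0"
      using z1 intU Ule by (subst (asm) integral_nonneg_eq_0_iff_AE) auto
    then have aU: "AE s in N. s \<in> {x \<in> space N. U x \<in> {q}}" using AE_space[of N] by eventually_elim auto
    have "AE s in N. V s - q = 0"
      using z2 intV Vge by (subst (asm) integral_nonneg_eq_0_iff_AE) auto
    then have aV: "AE s in N. s \<in> {x \<in> space N. V x \<in> {q}}" using AE_space[of N] by eventually_elim auto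
    have eU: "emeasure N {x \<in> space N. U x \<in> {q}} = 1"
      using aU UmN by (intro N.emeasure_eq_1_AE) auto
    have eV: "emeasure N {x \<in> space N. V x \<in> {q}} = 1"
      using aV VmN by (intro N.emeasure_eq_1_AE) auto
    have "emeasure M {x \<in> space M. W x \<in> {q}} = 1"
      using E[of "{q}"] eU eV t0 t1 by (simp add: ennreal_plus[symmetric])
    then have "AE x in M. W x = q"
      by (subst M.AE_iff_emeasure_eq_1) auto
    then show False using assms(4) by blast
  qed

  show ?thesis
    apply (rule exI[of _ N], rule exI[of _ U], rule exI[of _ V])
    using pN UmN VmN intU intV neq Meq sq by blast
qed

end
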